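(* Let $D$ be an integral domain, $S$ a multiplicative subset of $D$, and $M$ a torsion-free $D$-module which is a $w$-module. Then: (1) If $M$ is an $S$-SM-module, then $M$ is a $w$-locally $S$-Noetherian module. (2) If $M$ is a $w$-locally $S$-Noetherian module which has finite $w$-character, then $M$ is an $S$-SM-module.
   Context: Let $K$ be the quotient field of $D$; $I_v=(I^{-1})^{-1}$ with $I^{-1}=\{a\in K\mid aI\subseteq D\}$; $\mathrm{GV}(D)$ is the set of finitely generated ideals $J$ with $J_v=D$. For a torsion-free module $N$, $N_w=\{x\in N\otimes K\mid xJ\subseteq N\text{ for some }J\in\mathrm{GV}(D)\}$; $N$ is a $w$-module if $N_w=N$; maximal $w$-ideals are proper ideals $I$ with $I_w=I$ maximal among such. A submodule $N$ of $M$ is $S$-$w$-finite if there exist $s\in S$ and a finitely generated submodule $F$ of $M$ with $Ns\subseteq F_w\subseteq N_w$; $M$ is an $S$-SM-module if every $w$-submodule ($L_w=L$) is $S$-$w$-finite. A submodule is $S$-finite if $Ls\subseteq F\subseteq L$ for some $s\in S$ and finitely generated $F$; a module is $S$-Noetherian if every submodule is $S$-finite. $M$ is $w$-locally $S$-Noetherian if for every maximal $w$-ideal $\mathfrak{m}$ of $D$, $M_{\mathfrak{m}}$ is an $S$-Noetherian $D_{\mathfrak{m}}$-module. With $(aD:M)=\{d\in D\mid Md\subseteq aD\}$, $M$ has finite $w$-character if for each nonzero $a\in M$ with $(aD:M)\neq D$, $(aD:M)$ is contained in only finitely many maximal $w$-ideals of $D$. *)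

theory Defs
  imports Complex_Main "HOL-Computational_Algebra.Fraction_Field"
begin

text \<open>The integral domain D is a type 'a of class idom; its quotient field
K is the type 'a fract. A torsion-free D-module M is represented (up to isomorphism)
as a D-submodule of a K-vector space V (with scalar multiplication sc); then
M tensor K is the set of x in V with d x in M for some nonzero d in D.\<close>

definition embD :: "'a::idom \<Rightarrow> 'a fract" where
  "embD d = Fract d 1"

definition mult_subset :: "'a::idom set \<Rightarrow> bool" where
  "mult_subset S \<longleftrightarrow> 1 \<in> S \<and> (\<forall>s\<in>S. \<forall>t\<in>S. s * t \<in> S)"

definition d_ideal :: "'a::idom set \<Rightarrow> bool" where
  "d_ideal I \<longleftrightarrow> 0 \<in> I \<and> (\<forall>x\<in>I. \<forall>y\<in>I. x + y \<in> I) \<and> (\<forall>a. \<forall>x\<in>I. a * x \<in> I)"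

definition fg_ideal :: "'a::idom set \<Rightarrow> bool" where
  "fg_ideal J \<longleftrightarrow> (\<exists>F. finite F \<and> J = {\<Sum>f\<in>F. c f * f | c. True})"

definition finv :: "'a::idom fract set \<Rightarrow> 'a fract set" where
  "finv A = {q. \<forall>x\<in>A. q * x \<in> range embD}"

definition vcl :: "'a::idom set \<Rightarrow> 'a fract set" where
  "vcl I = finv (finv (embD ` I))"

definition GV :: "'a::idom set set" where
  "GV = {J. d_ideal J \<and> fg_ideal J \<and> vcl J = range embD}"

definition wcl :: "('a::idom fract \<Rightarrow> 'v \<Rightarrow> 'v) \<Rightarrow> 'v set \<Rightarrow> 'v set" where
  "wcl sc N = {x. (\<exists>d. d \<noteq> 0 \<and> sc (embD d) x \<in> N) \<and>
                  (\<exists>J\<in>GV. \<forall>j\<in>J. sc (embD j) x \<in> N)}"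

definition w_ideal :: "'a::idom set \<Rightarrow> bool" where
  "w_ideal I \<longleftrightarrow> d_ideal I \<and> wcl (*) (embD ` I) = embD ` I"

definition max_w_ideal :: "'a::idom set \<Rightarrow> bool" where
  "max_w_ideal m \<longleftrightarrow> w_ideal m \<and> m \<noteq> UNIV \<and>
     (\<forall>I. w_ideal I \<and> I \<noteq> UNIV \<and> m \<subseteq> I \<longrightarrow> I = m)"

definition dsub :: "('a::idom fract \<Rightarrow> 'v::ab_group_add \<Rightarrow> 'v) \<Rightarrow> 'v set \<Rightarrow> bool" where
  "dsub sc L \<longleftrightarrow> 0 \<in> L \<and> (\<forall>x\<in>L. \<forall>y\<in>L. x + y \<in> L) \<and> (\<forall>d. \<forall>x\<in>L. sc (embD d) x \<in> L)"

definition dspan :: "('a::idom fract \<Rightarrow> 'v::ab_group_add \<Rightarrow> 'v) \<Rightarrow> 'v set \<Rightarrow> 'v set" where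
  "dspan sc G = {\<Sum>g\<in>G. sc (embD (c g)) g | c. True}"

definition S_w_finite :: "('a::idom fract \<Rightarrow> 'v::ab_group_add \<Rightarrow> 'v) \<Rightarrow> 'a set \<Rightarrow> 'v set \<Rightarrow> 'v set \<Rightarrow> bool" where
  "S_w_finite sc S M N \<longleftrightarrow> (\<exists>s\<in>S. \<exists>G. finite G \<and> G \<subseteq> M \<and>
      sc (embD s) ` N \<subseteq> wcl sc (dspan sc G) \<and> wcl sc (dspan sc G) \<subseteq> wcl sc N)"

definition S_SM :: "('a::idom fract \<Rightarrow> 'v::ab_group_add \<Rightarrow> 'v) \<Rightarrow> 'a set \<Rightarrow> 'v set \<Rightarrow> bool" where
  "S_SM sc S M \<longleftrightarrow> (\<forall>L. dsub sc L \<and> L \<subseteq> M \<and> wcl sc L = L \<longrightarrow> S_w_finite sc S M L)"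

definition Dloc :: "'a::idom set \<Rightarrow> 'a fract set" where
  "Dloc m = {embD a / embD s | a s. s \<notin> m}"

definition Mloc :: "('a::idom fract \<Rightarrow> 'v \<Rightarrow> 'v) \<Rightarrow> 'a set \<Rightarrow> 'v set \<Rightarrow> 'v set" where
  "Mloc sc m M = {sc (inverse (embD s)) x | x s. x \<in> M \<and> s \<notin> m}"

definition rsub :: "('k \<Rightarrow> 'v::ab_group_add \<Rightarrow> 'v) \<Rightarrow> 'k set \<Rightarrow> 'v set \<Rightarrow> bool" where
  "rsub sc R L \<longleftrightarrow> 0 \<in> L \<and> (\<forall>x\<in>L. \<forall>y\<in>L. x + y \<in> L) \<and> (\<forall>r\<in>R. \<forall>x\<in>L. sc r x \<in> L)"

definition rspan :: "('k \<Rightarrow> 'v::ab_group_add \<Rightarrow> 'v) \<Rightarrow> 'k set \<Rightarrow> 'v set \<Rightarrow> 'v set" where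
  "rspan sc R G = {\<Sum>g\<in>G. sc (c g) g | c. \<forall>g\<in>G. c g \<in> R}"

definition S_noetherian :: "('k \<Rightarrow> 'v::ab_group_add \<Rightarrow> 'v) \<Rightarrow> 'k set \<Rightarrow> 'k set \<Rightarrow> 'v set \<Rightarrow> bool" where
  "S_noetherian sc R T N \<longleftrightarrow> (\<forall>L. rsub sc R L \<and> L \<subseteq> N \<longrightarrow>
      (\<exists>t\<in>T. \<exists>G. finite G \<and> G \<subseteq> L \<and> sc t ` L \<subseteq> rspan sc R G \<and> rspan sc R G \<subseteq> L))"

definition w_loc_S_noetherian :: "('a::idom fract \<Rightarrow> 'v::ab_group_add \<Rightarrow> 'v) \<Rightarrow> 'a set \<Rightarrow> 'v set \<Rightarrow> bool" where
  "w_loc_S_noetherian sc S M \<longleftrightarrow>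
     (\<forall>m. max_w_ideal m \<longrightarrow> S_noetherian sc (Dloc m) (embD ` S) (Mloc sc m M))"

definition colon :: "('a::idom fract \<Rightarrow> 'v \<Rightarrow> 'v) \<Rightarrow> 'v \<Rightarrow> 'v set \<Rightarrow> 'a set" where
  "colon sc a M = {d. \<forall>x\<in>M. sc (embD d) x \<in> {sc (embD e) a | e. True}}"

definition finite_w_char :: "('a::idom fract \<Rightarrow> 'v::ab_group_add \<Rightarrow> 'v) \<Rightarrow> 'v set \<Rightarrow> bool" where
  "finite_w_char sc M \<longleftrightarrow> (\<forall>a\<in>M. a \<noteq> 0 \<and> colon sc a M \<noteq> UNIV \<longrightarrow>
      finite {m. max_w_ideal m \<and> colon sc a M \<subseteq> m})"

end

theory Submission
  imports Defs
begin


lemma embD_mult: "embD (a*b) = embD a * embD b" by (simp add: embD_def)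
lemma embD_add: "embD (a+b) = embD a + embD b" by (simp add: embD_def)
lemma embD_0[simp]: "embD 0 = 0" by (simp add: embD_def Zero_fract_def)
lemma embD_1[simp]: "embD 1 = 1" by (simp add: embD_def One_fract_def)
lemma embD_inj[simp]: "embD a = embD b \<longleftrightarrow> a = b" by (simp add: embD_def eq_fract)
lemma embD_eq0[simp]: "embD a = 0 \<longleftrightarrow> a = 0" by (metis embD_0 embD_inj)



definition ispan :: "'a::idom set \<Rightarrow> 'a set" where
  "ispan F = {\<Sum>f\<in>F. c f * f | c. True}"

lemma d_idealD: assumes "d_ideal I" shows "0 \<in> I" "x \<in> I \<Longrightarrow> y \<in> I \<Longrightarrow> x + y \<in> I" "x \<in> I \<Longrightarrow> a * x \<in> I"
  using assms by (auto simp: d_ideal_def)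

lemma d_ideal_sum: assumes "d_ideal I" shows "(\<And>x. x \<in> A \<Longrightarrow> g x \<in> I) \<Longrightarrow> sum g A \<in> I"
  by (induct A rule: infinite_finite_induct) (auto intro: d_idealD[OF assms])

lemma d_ideal_UNIV: "d_ideal I \<Longrightarrow> 1 \<in> I \<Longrightarrow> I = UNIV"
  by (metis UNIV_eq_I d_idealD(3) mult.right_neutral)

lemma ispan_ideal: "d_ideal (ispan F)"
  unfolding d_ideal_def ispan_def
proof (intro conjI ballI allI)
  show "0 \<in> {\<Sum>f\<in>F. c f * f |c. True}" by (rule CollectI, rule exI[of _ "\<lambda>_. 0"]) simp
next
  fix x y assume "x \<in> {\<Sum>f\<in>F. c f * f |c. True}" "y \<in> {\<Sum>f\<in>F. c f * f |c. True}"
  then obtain c1 c2 where "x = (\<Sum>f\<in>F. c1 f * f)" "y = (\<Sum>f\<in>F. c2 f * f)" by auto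
  then have "x + y = (\<Sum>f\<in>F. (c1 f + c2 f) * f)" by (simp add: sum.distrib algebra_simps)
  then show "x + y \<in> {\<Sum>f\<in>F. c f * f |c. True}" unfolding mem_Collect_eq by (intro exI[of _ "\<lambda>f. c1 f + c2 f"]) simp
next
  fix a x assume "x \<in> {\<Sum>f\<in>F. c f * f |c. True}"
  then obtain c1 where "x = (\<Sum>f\<in>F. c1 f * f)" by auto
  then have "a * x = (\<Sum>f\<in>F. (a * c1 f) * f)" by (simp add: sum_distrib_left algebra_simps)
  then show "a * x \<in> {\<Sum>f\<in>F. c f * f |c. True}" unfolding mem_Collect_eq by (intro exI[of _ "\<lambda>f. a * c1 f"]) simp
qed

lemma ispan_gen: assumes "finite F" "f \<in> F" shows "f \<in> ispan F"
proof -
  have "(\<Sum>g\<in>F. (if g = f then 1 else 0) * g) = (\<Sum>g\<in>F. if g = f then g else 0)"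
    by (rule sum.cong) simp_all
  also have "\<dots> = f" using assms by simp
  finally have "f = (\<Sum>g\<in>F. (if g = f then 1 else 0) * g)" by simp
  then show ?thesis unfolding ispan_def mem_Collect_eq by (intro exI[of _ "\<lambda>g. if g = f then 1 else 0"]) simp
qed

lemma ispan_sub: assumes "d_ideal I" "F \<subseteq> I" shows "ispan F \<subseteq> I"
  unfolding ispan_def using assms by (auto intro!: d_ideal_sum d_idealD)

lemma finv_ispan: assumes "\<forall>f\<in>F. q * embD f \<in> range embD" shows "q \<in> finv (embD ` ispan F)"
  unfolding finv_def ispan_def
proof (clarsimp)
  fix c
  have "q * embD (\<Sum>f\<in>F. c f * f) = (\<Sum>f\<in>F. embD (c f) * (q * embD f))"
  proof -
    have "embD (\<Sum>f\<in>F. c f * f) = (\<Sum>f\<in>F. embD (c f) * embD f)"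
      by (induct F rule: infinite_finite_induct) (auto simp: embD_add embD_mult)
    then show ?thesis by (simp add: sum_distrib_left algebra_simps)
  qed
  moreover have "(\<Sum>f\<in>F. embD (c f) * (q * embD f)) \<in> range embD"
    using assms
  proof (induct F rule: infinite_finite_induct)
    case (insert x F)
    then obtain e where "q * embD x = embD e" by auto
    moreover obtain e' where "(\<Sum>f\<in>F. embD (c f) * (q * embD f)) = embD e'" using insert by auto
    ultimately show ?case using insert by (simp add: embD_add[symmetric] embD_mult[symmetric])
  qed (auto intro: range_eqI[of _ _ 0])
  ultimately show "q * embD (\<Sum>f\<in>F. c f * f) \<in> range embD" by simp
qed

lemma fg_ispan: "fg_ideal J \<longleftrightarrow> (\<exists>F. finite F \<and> J = ispan F)"
  by (simp add: fg_ideal_def ispan_def)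

lemma finv_range: "finv (range embD) = range (embD :: 'a::idom \<Rightarrow> _)"
proof
  show "finv (range embD) \<subseteq> range (embD :: 'a \<Rightarrow> _)"
    unfolding finv_def
  proof clarify
    fix x assume "\<forall>y\<in>range (embD :: 'a \<Rightarrow> _). x * y \<in> range embD"
    then have "x * embD 1 \<in> range embD" by blast
    then show "x \<in> range embD" by simp
  qed
  show "range embD \<subseteq> finv (range (embD :: 'a \<Rightarrow> _))"
    unfolding finv_def by (auto simp: embD_mult[symmetric])
qed

lemma finv_anti: "A \<subseteq> B \<Longrightarrow> finv B \<subseteq> finv A" unfolding finv_def by auto
lemma finv_finv: "A \<subseteq> finv (finv A)" unfolding finv_def by (auto simp: mult.commute)

lemma GV_UNIV: "(UNIV :: 'a::idom set) \<in> GV"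
proof -
  have "d_ideal (UNIV :: 'a set)" by (simp add: d_ideal_def)
  moreover have "(UNIV :: 'a set) = ispan {1}" unfolding ispan_def by auto
  ultimately show ?thesis unfolding GV_def vcl_def fg_ispan by (auto simp: finv_range)
qed

lemma GV_finv: assumes "J \<in> GV" shows "finv (embD ` J) = range embD"
proof -
  let ?A = "finv (embD ` J)"
  have J: "d_ideal J" "finv ?A = range embD" using assms by (auto simp: GV_def vcl_def)
  have "?A \<subseteq> finv (finv ?A)" by (rule finv_finv)
  also have "\<dots> = range embD" using J by (simp add: finv_range)
  finally have "?A \<subseteq> range embD" .
  moreover have "range embD \<subseteq> ?A" unfolding finv_def
    using J(1) by (auto simp: embD_mult[symmetric])
  ultimately show ?thesis by blast
qed

lemma GV_in: assumes "J \<in> GV" "\<forall>j\<in>J. x * embD j \<in> range embD" shows "x \<in> range embD"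
  using assms GV_finv[OF assms(1)] unfolding finv_def by auto

lemma GV_mult: assumes "ispan F1 \<in> GV" "ispan F2 \<in> GV" "finite F1" "finite F2"
  shows "ispan ((\<lambda>(a,b). a * b) ` (F1 \<times> F2)) \<in> GV"
proof -
  let ?F = "(\<lambda>(a,b). a * b) ` (F1 \<times> F2)"
  have "finv (embD ` ispan ?F) \<subseteq> range embD"
  proof
    fix q assume q: "q \<in> finv (embD ` ispan ?F)"
    have "q * embD f1 \<in> range embD" if "f1 \<in> F1" for f1
    proof (rule GV_in[OF assms(2)], rule ballI)
      fix j assume "j \<in> ispan F2"
      have "\<forall>f2\<in>F2. (q * embD f1) * embD f2 \<in> range embD"
      proof
        fix f2 assume "f2 \<in> F2"
        then have "f1 * f2 \<in> ispan ?F" using that assms by (intro ispan_gen) auto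
        then show "(q * embD f1) * embD f2 \<in> range embD" using q unfolding finv_def
          by (auto simp: embD_mult mult.assoc)
      qed
      then have "q * embD f1 \<in> finv (embD ` ispan F2)" by (rule finv_ispan)
      then show "q * embD f1 * embD j \<in> range embD" using \<open>j \<in> ispan F2\<close> unfolding finv_def by auto
    qed
    then have "q \<in> finv (embD ` ispan F1)" by (intro finv_ispan) auto
    then show "q \<in> range embD" using GV_finv[OF assms(1)] by simp
  qed
  moreover have "range embD \<subseteq> finv (embD ` ispan ?F)"
    unfolding finv_def by (auto simp: embD_mult[symmetric])
  ultimately have "finv (embD ` ispan ?F) = range embD" by blast
  moreover have "fg_ideal (ispan ?F)" unfolding fg_ispan using assms by (intro exI[of _ ?F]) simp
  ultimately show ?thesis unfolding GV_def vcl_def by (simp add: finv_range ispan_ideal)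
qed



lemma wcl_mono: "N \<subseteq> N' \<Longrightarrow> wcl sc N \<subseteq> wcl sc N'"
  unfolding wcl_def by blast

lemma ideal_sub_wcl: assumes "d_ideal I" shows "embD ` I \<subseteq> wcl (*) (embD ` I)"
proof
  fix x assume "x \<in> embD ` I"
  then obtain y where y: "y \<in> I" "x = embD y" by auto
  have "\<forall>j\<in>UNIV. embD j * x \<in> embD ` I" using y d_idealD(3)[OF assms] by (auto simp: embD_mult[symmetric])
  then show "x \<in> wcl (*) (embD ` I)" unfolding wcl_def using y GV_UNIV
    by (auto intro!: exI[of _ 1])
qed

lemma w_ideal_GV_UNIV: assumes "w_ideal I" "J \<in> GV" "J \<subseteq> I" "d \<in> I" "d \<noteq> 0" shows "I = UNIV"
proof -
  have I: "d_ideal I" "wcl (*) (embD ` I) = embD ` I" using assms(1) by (auto simp: w_ideal_def)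
  have "1 \<in> wcl (*) (embD ` I)" unfolding wcl_def using assms
    by (auto intro!: bexI[of _ J] exI[of _ d])
  then have "1 \<in> I" using I by (metis embD_1 embD_inj imageE)
  then show ?thesis using d_ideal_UNIV I by blast
qed

lemma field_case: assumes "(J::'a::idom set) \<in> GV" "J \<subseteq> {0}" shows "max_w_ideal {0::'a}"
proof -
  have Jd: "d_ideal J" using assms by (simp add: GV_def)
  then have "J = {0}" using assms d_idealD(1) by blast
  then have "vcl {0::'a} = range embD" using assms by (simp add: GV_def)
  then have "finv (finv {0::'a fract}) = range embD" by (simp add: vcl_def)
  moreover have "finv {0::'a fract} = UNIV" by (auto simp: finv_def intro: range_eqI[of _ _ 0])
  ultimately have all: "finv (UNIV::'a fract set) = range embD" by simp
  have inv: "\<exists>e. d * e = 1" if "d \<noteq> 0" for d :: 'a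
  proof -
    have "(1::'a fract) \<in> finv UNIV" using all by (metis embD_1 rangeI)
    then have "1 * inverse (embD d) \<in> range embD" by (simp add: finv_def)
    then obtain e where "inverse (embD d) = embD e" by auto
    then have "embD (d * e) = embD 1" using that by (simp add: embD_mult flip: \<open>inverse (embD d) = embD e\<close>)
    then have "d * e = 1" by (simp only: embD_inj)
    then show ?thesis by blast
  qed
  have wz: "wcl (*) (embD ` {0::'a}) = embD ` {0}"
  proof
    show "wcl (*) (embD ` {0::'a}) \<subseteq> embD ` {0}" unfolding wcl_def by auto
    show "embD ` {0::'a} \<subseteq> wcl (*) (embD ` {0})" by (rule ideal_sub_wcl) (simp add: d_ideal_def)
  qed
  have "w_ideal {0::'a}" unfolding w_ideal_def using wz by (simp add: d_ideal_def)
  moreover have "I = {0}" if HI: "w_ideal I" "I \<noteq> UNIV" "{0} \<subseteq> I" for I :: "'a set"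
  proof (rule ccontr)
    assume "I \<noteq> {0}"
    then obtain d where d: "d \<in> I" "d \<noteq> 0" using HI(3) by blast
    then obtain e where "d * e = 1" using inv by blast
    then have "1 \<in> I" using d HI(1) d_idealD(3)[of I d e] by (auto simp: w_ideal_def mult.commute)
    then show False using HI d_ideal_UNIV by (auto simp: w_ideal_def)
  qed
  moreover have "{0::'a} \<noteq> UNIV" by (metis UNIV_I singletonD zero_neq_one)
  ultimately show ?thesis unfolding max_w_ideal_def by blast
qed

lemma max_w_idealD: assumes "max_w_ideal m" shows "d_ideal m" "0 \<in> m" "1 \<notin> m"
  "wcl (*) (embD ` m) = embD ` m"
  using assms d_ideal_UNIV by (auto simp: max_w_ideal_def w_ideal_def d_ideal_def)



lemma embD_in[simp]: "embD x \<in> embD ` A \<longleftrightarrow> x \<in> A"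
  by (rule inj_image_mem_iff) (simp add: inj_def)

lemma GV_ispan: assumes "J \<in> GV" obtains F where "finite F" "J = ispan F"
  using assms by (auto simp: GV_def fg_ispan)

lemma exists_max: assumes I: "d_ideal I" and noJ: "\<not>(\<exists>J\<in>GV. J \<subseteq> I)"
  shows "\<exists>m. max_w_ideal m \<and> I \<subseteq> m"
proof -
  define P where "P = {Q. d_ideal Q \<and> I \<subseteq> Q \<and> \<not>(\<exists>J\<in>GV. J \<subseteq> Q)}"
  have "I \<in> P" using assms by (simp add: P_def)
  then have "P \<noteq> {}" by blast
  moreover have "\<Union>C \<in> P" if C: "C \<noteq> {}" "subset.chain P C" for C
  proof -
    have CP: "C \<subseteq> P" and cmp: "\<And>A B. A \<in> C \<Longrightarrow> B \<in> C \<Longrightarrow> A \<subseteq> B \<or> B \<subseteq> A"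
      using C(2) by (auto simp: subset.chain_def)
    have idl: "d_ideal A" "I \<subseteq> A" "\<not>(\<exists>J\<in>GV. J \<subseteq> A)" if "A \<in> C" for A
      using that CP by (auto simp: P_def)
    obtain A0 where A0: "A0 \<in> C" using C(1) by blast
    have "d_ideal (\<Union>C)" unfolding d_ideal_def
    proof (intro conjI ballI allI)
      show "0 \<in> \<Union>C" using A0 idl(1)[OF A0] d_idealD(1) by blast
    next
      fix x y assume "x \<in> \<Union>C" "y \<in> \<Union>C"
      then obtain A B where AB: "A \<in> C" "B \<in> C" "x \<in> A" "y \<in> B" by blast
      show "x + y \<in> \<Union>C"
      proof (cases "A \<subseteq> B")
        case True then show ?thesis using AB idl(1)[of B] d_idealD(2) by blast
      next
        case False then have "B \<subseteq> A" using cmp AB by blast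
        then show ?thesis using AB idl(1)[of A] d_idealD(2) by blast
      qed
    next
      fix a x assume "x \<in> \<Union>C"
      then obtain A where "A \<in> C" "x \<in> A" by blast
      then show "a * x \<in> \<Union>C" using idl(1)[of A] d_idealD(3) by blast
    qed
    moreover have "I \<subseteq> \<Union>C" using A0 idl(2)[OF A0] by blast
    moreover have "\<not>(\<exists>J\<in>GV. J \<subseteq> \<Union>C)"
    proof
      assume "\<exists>J\<in>GV. J \<subseteq> \<Union>C"
      then obtain J where J: "J \<in> GV" "J \<subseteq> \<Union>C" by blast
      obtain F where F: "finite F" "J = ispan F" using GV_ispan[OF J(1)] by blast
      then have "F \<subseteq> \<Union>C" using J ispan_gen by blast
      then obtain B where B: "B \<in> C" "F \<subseteq> B"
        using finite_subset_Union_chain[OF F(1) _ C(1) C(2)] by blast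
      then have "J \<subseteq> B" using F ispan_sub idl(1)[OF B(1)] by blast
      then show False using idl(3)[OF B(1)] J(1) by blast
    qed
    ultimately show ?thesis by (simp add: P_def)
  qed
  ultimately obtain Q where Q: "Q \<in> P" "\<And>X. X \<in> P \<Longrightarrow> Q \<subseteq> X \<Longrightarrow> X = Q"
    using subset_Zorn_nonempty[of P] by blast
  have Qd: "d_ideal Q" "I \<subseteq> Q" and QJ: "\<not>(\<exists>J\<in>GV. J \<subseteq> Q)" using Q(1) by (auto simp: P_def)
  have QU: "Q \<noteq> UNIV" using QJ GV_UNIV by blast
  have wQ: "wcl (*) (embD ` Q) = embD ` Q"
  proof
    show "embD ` Q \<subseteq> wcl (*) (embD ` Q)" by (rule ideal_sub_wcl[OF Qd(1)])
    show "wcl (*) (embD ` Q) \<subseteq> embD ` Q"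
    proof
      fix x assume "x \<in> wcl (*) (embD ` Q)"
      then obtain J where J: "J \<in> GV" "\<forall>j\<in>J. embD j * x \<in> embD ` Q" unfolding wcl_def by blast
      then have "x \<in> range embD" by (intro GV_in[OF J(1)]) (auto simp: mult.commute)
      then obtain y where y: "x = embD y" by blast
      have yJ: "j * y \<in> Q" if "j \<in> J" for j
        using J(2) that y by (auto simp: embD_mult[symmetric])
      have "y \<in> Q"
      proof (rule ccontr)
        assume yQ: "y \<notin> Q"
        define Q' where "Q' = {q + r * y | q r. q \<in> Q}"
        have Q'd: "d_ideal Q'" unfolding d_ideal_def Q'_def
        proof (intro conjI ballI allI)
          show "0 \<in> {q + r * y |q r. q \<in> Q}" using d_idealD(1)[OF Qd(1)] by force
        next
          fix a b assume "a \<in> {q + r * y |q r. q \<in> Q}" "b \<in> {q + r * y |q r. q \<in> Q}"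
          then obtain q1 r1 q2 r2 where "a = q1 + r1 * y" "b = q2 + r2 * y" "q1 \<in> Q" "q2 \<in> Q" by blast
          then have "a + b = (q1 + q2) + (r1 + r2) * y" "q1 + q2 \<in> Q"
            using d_idealD(2)[OF Qd(1)] by (auto simp: algebra_simps)
          then show "a + b \<in> {q + r * y |q r. q \<in> Q}" by blast
        next
          fix c a assume "a \<in> {q + r * y |q r. q \<in> Q}"
          then obtain q1 r1 where "a = q1 + r1 * y" "q1 \<in> Q" by blast
          moreover have "c * q1 \<in> Q" using d_idealD(3)[OF Qd(1)] \<open>q1 \<in> Q\<close> by blast
          ultimately have "c * a = (c * q1) + (c * r1) * y" "c * q1 \<in> Q"
            by (auto simp: algebra_simps)
          then show "c * a \<in> {q + r * y |q r. q \<in> Q}" by blast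
        qed
        have QQ': "Q \<subseteq> Q'" unfolding Q'_def by (force intro: exI[of _ 0])
        have "y \<in> Q'" unfolding Q'_def using d_idealD(1)[OF Qd(1)] by (force intro: exI[of _ 1])
        then have "Q' \<noteq> Q" using yQ by blast
        then have "Q' \<notin> P" using Q(2) QQ' by blast
        then obtain J' where J': "J' \<in> GV" "J' \<subseteq> Q'" using Q'd QQ' Qd(2) by (auto simp: P_def)
        obtain F1 where F1: "finite F1" "J = ispan F1" using J(1) by (rule GV_ispan)
        obtain F2 where F2: "finite F2" "J' = ispan F2" using J'(1) by (rule GV_ispan)
        let ?F = "(\<lambda>(a,b). a * b) ` (F1 \<times> F2)"
        have "ispan ?F \<in> GV" using GV_mult[of F1 F2] F1 F2 J(1) J'(1) by simp
        moreover have "ispan ?F \<subseteq> Q"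
        proof (rule ispan_sub[OF Qd(1)], clarify)
          fix f1 f2 assume f: "f1 \<in> F1" "f2 \<in> F2"
          then have "f1 \<in> J" "f2 \<in> Q'" using F1 F2 J' ispan_gen by blast+
          then obtain q r where qr: "f2 = q + r * y" "q \<in> Q" unfolding Q'_def by blast
          have "f1 * f2 = f1 * q + r * (f1 * y)" by (simp add: qr algebra_simps)
          moreover have "f1 * q \<in> Q" using qr(2) d_idealD(3)[OF Qd(1)] by blast
          moreover have "r * (f1 * y) \<in> Q" using yJ[OF \<open>f1 \<in> J\<close>] d_idealD(3)[OF Qd(1)] by blast
          ultimately show "f1 * f2 \<in> Q" using d_idealD(2)[OF Qd(1)] by simp
        qed
        ultimately show False using QJ by blast
      qed
      then show "x \<in> embD ` Q" using y by blast
    qed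
  qed
  have "I' = Q" if I': "w_ideal I'" "I' \<noteq> UNIV" "Q \<subseteq> I'" for I'
  proof (cases "\<exists>J\<in>GV. J \<subseteq> I'")
    case True
    then obtain J where J: "J \<in> GV" "J \<subseteq> I'" by blast
    show ?thesis
    proof (cases "\<exists>d\<in>I'. d \<noteq> 0")
      case True
      then show ?thesis using w_ideal_GV_UNIV[OF I'(1) J] I'(2) by blast
    next
      case False
      then have "I' \<subseteq> Q" using d_idealD(1)[OF Qd(1)] by auto
      then show ?thesis using I'(3) by blast
    qed
  next
    case False
    then have "I' \<in> P" using I' Qd(2) by (auto simp: P_def w_ideal_def)
    then show ?thesis using Q(2) I'(3) by blast
  qed
  then have "max_w_ideal Q" unfolding max_w_ideal_def w_ideal_def using Qd(1) wQ QU by blast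
  then show ?thesis using Qd(2) by blast
qed

lemma max_prime: assumes m: "max_w_ideal m" and ab: "a * b \<in> m" and a: "a \<notin> m" shows "b \<in> m"
proof -
  have md: "d_ideal m" "wcl (*) (embD ` m) = embD ` m" using max_w_idealD[OF m] by auto
  define Q where "Q = {d. d * a \<in> m}"
  have Qd: "d_ideal Q" unfolding Q_def d_ideal_def
  proof (intro conjI ballI allI)
    show "0 \<in> {d. d * a \<in> m}" using d_idealD(1)[OF md(1)] by simp
    show "x + y \<in> {d. d * a \<in> m}" if "x \<in> {d. d * a \<in> m}" "y \<in> {d. d * a \<in> m}" for x y
      using that d_idealD(2)[OF md(1)] by (simp add: distrib_right)
    show "c * x \<in> {d. d * a \<in> m}" if "x \<in> {d. d * a \<in> m}" for c x
      using that d_idealD(3)[OF md(1), of "x * a" c] by (simp add: mult.assoc)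
  qed
  have mQ: "m \<subseteq> Q" unfolding Q_def using d_idealD(3)[OF md(1)] by (auto simp: mult.commute)
  have QU: "Q \<noteq> UNIV"
  proof
    assume "Q = UNIV" then have "1 \<in> Q" by simp
    then show False using a by (simp add: Q_def)
  qed
  have "wcl (*) (embD ` Q) \<subseteq> embD ` Q"
  proof
    fix x assume "x \<in> wcl (*) (embD ` Q)"
    then obtain J e where J: "J \<in> GV" "\<forall>j\<in>J. embD j * x \<in> embD ` Q" and e: "e \<noteq> 0" "embD e * x \<in> embD ` Q"
      unfolding wcl_def by blast
    then have "x \<in> range embD" by (intro GV_in[OF J(1)]) (auto simp: mult.commute)
    then obtain y where y: "x = embD y" by blast
    have "embD (y * a) \<in> wcl (*) (embD ` m)" unfolding wcl_def
    proof (intro CollectI conjI exI bexI)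
      show "e \<noteq> 0" by fact
      have "embD (e * y) \<in> embD ` Q" using e y by (simp add: embD_mult)
      then have "e * y * a \<in> m" by (simp add: Q_def)
      then show "embD e * embD (y * a) \<in> embD ` m" by (simp add: embD_mult[symmetric] mult.assoc)
      show "\<forall>j\<in>J. embD j * embD (y * a) \<in> embD ` m"
      proof
        fix j assume "j \<in> J"
        then have "embD (j * y) \<in> embD ` Q" using J(2) y by (simp add: embD_mult)
        then have "j * y * a \<in> m" by (simp add: Q_def)
        then show "embD j * embD (y * a) \<in> embD ` m" by (simp add: embD_mult[symmetric] mult.assoc)
      qed
    qed (fact J(1))
    then have "y * a \<in> m" using md(2) by auto
    then show "x \<in> embD ` Q" using y by (auto simp: Q_def)
  qed
  then have "wcl (*) (embD ` Q) = embD ` Q" using ideal_sub_wcl[OF Qd] by blast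
  then have "w_ideal Q" using Qd unfolding w_ideal_def by blast
  then have "Q = m" using m mQ QU unfolding max_w_ideal_def by blast
  moreover have "b \<in> Q" using ab by (simp add: Q_def mult.commute)
  ultimately show ?thesis by simp
qed



lemma wcl_pt: assumes m: "max_w_ideal m" and x: "x \<in> wcl sc N"
  shows "\<exists>t. t \<notin> m \<and> sc (embD t) x \<in> N"
proof -
  obtain d J where d: "d \<noteq> 0" "sc (embD d) x \<in> N" and J: "J \<in> GV" "\<forall>j\<in>J. sc (embD j) x \<in> N"
    using x unfolding wcl_def by blast
  show ?thesis
  proof (cases "J \<subseteq> m")
    case False then show ?thesis using J by blast
  next
    case True
    have mw: "w_ideal m" "m \<noteq> UNIV" using m by (auto simp: max_w_ideal_def)
    show ?thesis
    proof (cases "\<exists>e\<in>m. e \<noteq> 0")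
      case True
      then show ?thesis using w_ideal_GV_UNIV[OF mw(1) J(1) \<open>J \<subseteq> m\<close>] mw(2) by blast
    next
      case False
      then have "d \<notin> m" using d by blast
      then show ?thesis using d by blast
    qed
  qed
qed

context
  fixes sc :: "'a::idom fract \<Rightarrow> 'v::ab_group_add \<Rightarrow> 'v"
  assumes vs: "vector_space sc"
begin

interpretation vector_space sc by (fact vs)

lemma sc_add: "sc (embD (a+b)) x = sc (embD a) x + sc (embD b) x"
  by (simp add: embD_add scale_left_distrib)
lemma sc_mult: "sc (embD (a*b)) x = sc (embD a) (sc (embD b) x)"
  by (simp add: embD_mult)

lemma dsubD: assumes "dsub sc L" shows "0 \<in> L" "x \<in> L \<Longrightarrow> y \<in> L \<Longrightarrow> x + y \<in> L" "x \<in> L \<Longrightarrow> sc (embD d) x \<in> L"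
  using assms by (auto simp: dsub_def)

lemma rsubD: assumes "rsub sc R L" shows "0 \<in> L" "x \<in> L \<Longrightarrow> y \<in> L \<Longrightarrow> x + y \<in> L" "r \<in> R \<Longrightarrow> x \<in> L \<Longrightarrow> sc r x \<in> L"
  using assms by (auto simp: rsub_def)

lemma dsub_wcl: assumes "dsub sc N" shows "N \<subseteq> wcl sc N"
proof
  fix x assume x: "x \<in> N"
  have "sc (embD 1) x \<in> N" using x by simp
  moreover have "\<forall>j\<in>UNIV. sc (embD j) x \<in> N" using dsubD(3)[OF assms x] by blast
  ultimately show "x \<in> wcl sc N" unfolding wcl_def using GV_UNIV
    by (intro CollectI conjI exI[of _ "1"] bexI[of _ UNIV]) auto
qed

lemma rsub_sum: assumes "rsub sc R L" "\<And>g. g \<in> G \<Longrightarrow> g \<in> L \<and> c g \<in> R"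
  shows "(\<Sum>g\<in>G. sc (c g) g) \<in> L"
  using assms(2)
  by (induct G rule: infinite_finite_induct) (auto intro: rsubD[OF assms(1)])

lemma rspan_sub: assumes "rsub sc R L" "G \<subseteq> L" shows "rspan sc R G \<subseteq> L"
  unfolding rspan_def using rsub_sum[OF assms(1)] assms(2) by blast

lemma dsub_sum: assumes "dsub sc L" "G \<subseteq> L"
  shows "(\<Sum>g\<in>G. sc (embD (c g)) g) \<in> L"
  using assms(2)
  by (induct G rule: infinite_finite_induct) (auto intro: dsubD[OF assms(1)])

lemma dspan_sub: assumes "dsub sc L" "G \<subseteq> L" shows "dspan sc G \<subseteq> L"
  unfolding dspan_def using dsub_sum[OF assms] by blast

lemma dspan_dsub: "dsub sc (dspan sc G)"
  unfolding dsub_def dspan_def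
proof (intro conjI ballI allI)
  show "0 \<in> {\<Sum>g\<in>G. sc (embD (c g)) g |c. True}"
    unfolding mem_Collect_eq by (intro exI[of _ "\<lambda>_. 0"]) simp
next
  fix x y assume "x \<in> {\<Sum>g\<in>G. sc (embD (c g)) g |c. True}" "y \<in> {\<Sum>g\<in>G. sc (embD (c g)) g |c. True}"
  then obtain c1 c2 where "x = (\<Sum>g\<in>G. sc (embD (c1 g)) g)" "y = (\<Sum>g\<in>G. sc (embD (c2 g)) g)" by blast
  then have "x + y = (\<Sum>g\<in>G. sc (embD (c1 g + c2 g)) g)" by (simp add: sc_add sum.distrib)
  then show "x + y \<in> {\<Sum>g\<in>G. sc (embD (c g)) g |c. True}"
    unfolding mem_Collect_eq by (intro exI[of _ "\<lambda>g. c1 g + c2 g"]) simp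
next
  fix d x assume "x \<in> {\<Sum>g\<in>G. sc (embD (c g)) g |c. True}"
  then obtain c1 where "x = (\<Sum>g\<in>G. sc (embD (c1 g)) g)" by blast
  then have "sc (embD d) x = (\<Sum>g\<in>G. sc (embD (d * c1 g)) g)" by (simp add: sc_mult scale_sum_right)
  then show "sc (embD d) x \<in> {\<Sum>g\<in>G. sc (embD (c g)) g |c. True}"
    unfolding mem_Collect_eq by (intro exI[of _ "\<lambda>g. d * c1 g"]) simp
qed

lemma dspan_gen: assumes "finite G" "x \<in> G" shows "x \<in> dspan sc G"
proof -
  have "(\<Sum>g\<in>G. sc (embD (if g = x then 1 else 0)) g) = (\<Sum>g\<in>G. if g = x then g else 0)"
    by (rule sum.cong) simp_all
  also have "\<dots> = x" using assms by simp
  finally have "x = (\<Sum>g\<in>G. sc (embD (if g = x then 1 else 0)) g)" by simp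
  then show ?thesis unfolding dspan_def mem_Collect_eq by (intro exI[of _ "\<lambda>g. if g = x then 1 else 0"]) simp
qed

lemma local_global: assumes F: "dsub sc F"
  and H: "\<And>m. max_w_ideal m \<Longrightarrow> \<exists>t. t \<notin> m \<and> sc (embD t) z \<in> F"
  shows "z \<in> wcl sc F"
proof -
  define I where "I = {d. sc (embD d) z \<in> F}"
  have Id: "d_ideal I" unfolding I_def d_ideal_def
  proof (intro conjI ballI allI)
    show "0 \<in> {d. sc (embD d) z \<in> F}" using dsubD(1)[OF F] by simp
    show "x + y \<in> {d. sc (embD d) z \<in> F}" if "x \<in> {d. sc (embD d) z \<in> F}" "y \<in> {d. sc (embD d) z \<in> F}" for x y
      using that dsubD(2)[OF F] by (simp add: sc_add)
    show "a * x \<in> {d. sc (embD d) z \<in> F}" if "x \<in> {d. sc (embD d) z \<in> F}" for a x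
      using dsubD(3)[OF F that[simplified], of a] by (simp add: embD_mult)
  qed
  show ?thesis
  proof (cases "\<exists>J\<in>GV. J \<subseteq> I")
    case True
    then obtain J where J: "J \<in> GV" "J \<subseteq> I" by blast
    have "\<exists>d. d \<noteq> 0 \<and> d \<in> I"
    proof (cases "J \<subseteq> {0}")
      case True
      then have "max_w_ideal {0::'a}" by (rule field_case[OF J(1)])
      then show ?thesis using H[of "{0}"] unfolding I_def by blast
    next
      case False then show ?thesis using J by blast
    qed
    then show ?thesis using J unfolding wcl_def I_def by blast
  next
    case False
    then obtain m where "max_w_ideal m" "I \<subseteq> m" using exists_max[OF Id] by blast
    then show ?thesis using H[of m] unfolding I_def by blast
  qed
qed

end


lemma embD_div: "t \<noteq> 0 \<Longrightarrow> embD a / embD t = Fract a t"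
  by (simp add: embD_def)

lemma max_notin_ne: "max_w_ideal m \<Longrightarrow> t \<notin> m \<Longrightarrow> t \<noteq> 0"
  using max_w_idealD(2) by blast

lemma max_prime': "max_w_ideal m \<Longrightarrow> a \<notin> m \<Longrightarrow> b \<notin> m \<Longrightarrow> a * b \<notin> m"
  using max_prime by blast

lemma Dloc_embD: "max_w_ideal m \<Longrightarrow> embD d \<in> Dloc m"
proof -
  assume "max_w_ideal m"
  then have "1 \<notin> m" using max_w_idealD(3) by blast
  moreover have "embD d = embD d / embD 1" by simp
  ultimately show ?thesis unfolding Dloc_def by blast
qed

lemma Dloc_inv: "t \<notin> m \<Longrightarrow> inverse (embD t) \<in> Dloc m"
proof -
  assume "t \<notin> m"
  moreover have "inverse (embD t) = embD 1 / embD t" by (simp add: divide_inverse)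
  ultimately show ?thesis unfolding Dloc_def by blast
qed

lemma Dloc_mult: assumes m: "max_w_ideal m" and "p \<in> Dloc m" "q \<in> Dloc m" shows "p * q \<in> Dloc m"
proof -
  obtain a s b t where "p = embD a / embD s" "q = embD b / embD t" "s \<notin> m" "t \<notin> m"
    using assms unfolding Dloc_def by blast
  then have "p * q = embD (a * b) / embD (s * t)" "s * t \<notin> m"
    using max_prime'[OF m] by (auto simp: embD_mult)
  then show ?thesis unfolding Dloc_def by blast
qed

lemma Dloc_add: assumes m: "max_w_ideal m" and "p \<in> Dloc m" "q \<in> Dloc m" shows "p + q \<in> Dloc m"
proof -
  obtain a s b t where pq: "p = embD a / embD s" "q = embD b / embD t" and st: "s \<notin> m" "t \<notin> m"
    using assms unfolding Dloc_def by blast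
  have ne: "s \<noteq> 0" "t \<noteq> 0" using st max_notin_ne[OF m] by auto
  have "p + q = embD (a * t + b * s) / embD (s * t)"
    using ne by (simp add: pq embD_div mult_ac)
  moreover have "s * t \<notin> m" using max_prime'[OF m st] .
  ultimately show ?thesis unfolding Dloc_def by blast
qed

lemma Dloc_0: "max_w_ideal m \<Longrightarrow> 0 \<in> Dloc m"
  using Dloc_embD[of m 0] by simp

context
  fixes sc :: "'a::idom fract \<Rightarrow> 'v::ab_group_add \<Rightarrow> 'v"
  assumes vs: "vector_space sc"
begin

interpretation vector_space sc by (fact vs)

lemma rsub_div: assumes m: "max_w_ideal m" and X: "rsub sc (Dloc m) X" and t: "t \<notin> m"
  and w: "sc (embD t) w \<in> X" shows "w \<in> X"
proof -
  have "t \<noteq> 0" using max_notin_ne[OF m t] .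
  then have "sc (inverse (embD t)) (sc (embD t) w) = w" by simp
  then show ?thesis using rsubD(3)[OF vs X Dloc_inv[OF t] w] by simp
qed

lemma rspan_rsub: assumes m: "max_w_ideal m" shows "rsub sc (Dloc m) (rspan sc (Dloc m) G)"
  unfolding rsub_def rspan_def
proof (intro conjI ballI allI)
  show "0 \<in> {\<Sum>g\<in>G. sc (c g) g |c. \<forall>g\<in>G. c g \<in> Dloc m}"
    unfolding mem_Collect_eq using Dloc_0[OF m] by (intro exI[of _ "\<lambda>_. 0"]) simp
next
  fix x y assume "x \<in> {\<Sum>g\<in>G. sc (c g) g |c. \<forall>g\<in>G. c g \<in> Dloc m}" "y \<in> {\<Sum>g\<in>G. sc (c g) g |c. \<forall>g\<in>G. c g \<in> Dloc m}"
  then obtain c1 c2 where c: "x = (\<Sum>g\<in>G. sc (c1 g) g)" "y = (\<Sum>g\<in>G. sc (c2 g) g)"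
    "\<forall>g\<in>G. c1 g \<in> Dloc m" "\<forall>g\<in>G. c2 g \<in> Dloc m" by blast
  then have "x + y = (\<Sum>g\<in>G. sc (c1 g + c2 g) g)" by (simp add: scale_left_distrib sum.distrib)
  moreover have "\<forall>g\<in>G. c1 g + c2 g \<in> Dloc m" using c Dloc_add[OF m] by blast
  ultimately show "x + y \<in> {\<Sum>g\<in>G. sc (c g) g |c. \<forall>g\<in>G. c g \<in> Dloc m}"
    unfolding mem_Collect_eq by (intro exI[of _ "\<lambda>g. c1 g + c2 g"]) simp
next
  fix r x assume r: "r \<in> Dloc m" and "x \<in> {\<Sum>g\<in>G. sc (c g) g |c. \<forall>g\<in>G. c g \<in> Dloc m}"
  then obtain c1 where c: "x = (\<Sum>g\<in>G. sc (c1 g) g)" "\<forall>g\<in>G. c1 g \<in> Dloc m" by blast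
  then have "sc r x = (\<Sum>g\<in>G. sc (r * c1 g) g)" by (simp add: scale_sum_right)
  moreover have "\<forall>g\<in>G. r * c1 g \<in> Dloc m" using c r Dloc_mult[OF m] by blast
  ultimately show "sc r x \<in> {\<Sum>g\<in>G. sc (c g) g |c. \<forall>g\<in>G. c g \<in> Dloc m}"
    unfolding mem_Collect_eq by (intro exI[of _ "\<lambda>g. r * c1 g"]) simp
qed

lemma dspan_rspan: assumes m: "max_w_ideal m" shows "dspan sc G \<subseteq> rspan sc (Dloc m) G"
proof
  fix x assume "x \<in> dspan sc G"
  then obtain c where "x = (\<Sum>g\<in>G. sc (embD (c g)) g)" unfolding dspan_def by blast
  then show "x \<in> rspan sc (Dloc m) G" unfolding rspan_def mem_Collect_eq using Dloc_embD[OF m]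
    by (intro exI[of _ "\<lambda>g. embD (c g)"]) simp
qed

lemma part1: assumes M: "dsub sc M" "wcl sc M = M" and SM: "S_SM sc S M"
  shows "w_loc_S_noetherian sc S M"
  unfolding w_loc_S_noetherian_def S_noetherian_def
proof (intro allI impI)
  fix m N assume m: "max_w_ideal m" and N: "rsub sc (Dloc m) N \<and> N \<subseteq> Mloc sc m M"
  define L0 where "L0 = N \<inter> M"
  have Nr: "rsub sc (Dloc m) N" using N by blast
  have L0d: "dsub sc L0" unfolding L0_def dsub_def
  proof (intro conjI ballI allI)
    show "0 \<in> N \<inter> M" using rsubD(1)[OF vs Nr] dsubD(1)[OF vs M(1)] by blast
    show "x + y \<in> N \<inter> M" if "x \<in> N \<inter> M" "y \<in> N \<inter> M" for x y
      using that rsubD(2)[OF vs Nr] dsubD(2)[OF vs M(1)] by blast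
    show "sc (embD d) x \<in> N \<inter> M" if "x \<in> N \<inter> M" for d x
      using that rsubD(3)[OF vs Nr Dloc_embD[OF m]] dsubD(3)[OF vs M(1)] by blast
  qed
  have L0w: "wcl sc L0 = L0"
  proof
    show "L0 \<subseteq> wcl sc L0" by (rule dsub_wcl[OF vs L0d])
    show "wcl sc L0 \<subseteq> L0"
    proof
      fix x assume x: "x \<in> wcl sc L0"
      have "L0 \<subseteq> M" by (simp add: L0_def)
      then have "x \<in> M" using x wcl_mono[of L0 M sc] M(2) by blast
      moreover obtain t where "t \<notin> m" "sc (embD t) x \<in> L0" using wcl_pt[OF m x] by blast
      then have "x \<in> N" using rsub_div[OF m Nr, of t x] by (simp add: L0_def)
      ultimately show "x \<in> L0" by (simp add: L0_def)
    qed
  qed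
  have "S_w_finite sc S M L0" using SM L0d L0w unfolding S_SM_def L0_def by blast
  then obtain s G where s: "s \<in> S" and G: "finite G" "G \<subseteq> M"
    and sG: "sc (embD s) ` L0 \<subseteq> wcl sc (dspan sc G)" "wcl sc (dspan sc G) \<subseteq> wcl sc L0"
    unfolding S_w_finite_def by blast
  have GN: "G \<subseteq> N"
  proof -
    have "G \<subseteq> dspan sc G" using dspan_gen[OF vs G(1)] by blast
    also have "\<dots> \<subseteq> wcl sc (dspan sc G)" by (rule dsub_wcl[OF vs dspan_dsub[OF vs]])
    also have "\<dots> \<subseteq> L0" using sG(2) L0w by simp
    finally show ?thesis by (auto simp: L0_def)
  qed
  have RN: "rspan sc (Dloc m) G \<subseteq> N" by (rule rspan_sub[OF vs N[THEN conjunct1] GN])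
  have "sc (embD s) ` N \<subseteq> rspan sc (Dloc m) G"
  proof clarify
    fix y assume y: "y \<in> N"
    then obtain x u where xu: "y = sc (inverse (embD u)) x" "x \<in> M" "u \<notin> m"
      using N unfolding Mloc_def by blast
    have u0: "u \<noteq> 0" using max_notin_ne[OF m xu(3)] .
    have xy: "x = sc (embD u) y" using u0 by (simp add: xu(1))
    have "x \<in> N" unfolding xy by (rule rsubD(3)[OF vs Nr Dloc_embD[OF m] y])
    then have "x \<in> L0" using xu(2) by (simp add: L0_def)
    then have "sc (embD s) x \<in> wcl sc (dspan sc G)" using sG(1) unfolding image_subset_iff by blast
    then obtain t where t: "t \<notin> m" "sc (embD t) (sc (embD s) x) \<in> dspan sc G"
      using wcl_pt[OF m, of "sc (embD s) x" sc "dspan sc G"] by blast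
    have "sc (embD (t * u)) (sc (embD s) y) = sc (embD t * embD u * embD s) y"
      by (simp add: embD_mult)
    also have "\<dots> = sc (embD t * embD s * embD u) y" by (simp only: mult_ac)
    also have "\<dots> = sc (embD t) (sc (embD s) x)" by (simp add: xy)
    finally have "sc (embD (t * u)) (sc (embD s) y) = sc (embD t) (sc (embD s) x)" .
    then have "sc (embD (t * u)) (sc (embD s) y) \<in> rspan sc (Dloc m) G"
      using t(2) dspan_rspan[OF m] by auto
    then show "sc (embD s) y \<in> rspan sc (Dloc m) G"
      using rsub_div[OF m rspan_rsub[OF m] max_prime'[OF m t(1) xu(3)]] by blast
  qed
  then show "\<exists>t\<in>embD ` S. \<exists>G. finite G \<and> G \<subseteq> N \<and> sc t ` N \<subseteq> rspan sc (Dloc m) G \<and> rspan sc (Dloc m) G \<subseteq> N"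
    using s G(1) GN RN by blast
qed

end


lemma prod_S: assumes "mult_subset S" "\<And>i. i \<in> A \<Longrightarrow> f i \<in> S" shows "prod f A \<in> S"
  using assms(2)
proof (induct A rule: infinite_finite_induct)
  case (insert x F)
  then show ?case using assms(1) by (simp add: mult_subset_def)
qed (use assms(1) in \<open>simp_all add: mult_subset_def\<close>)

context
  fixes sc :: "'a::idom fract \<Rightarrow> 'v::ab_group_add \<Rightarrow> 'v"
  assumes vs: "vector_space sc"
begin

interpretation vector_space sc by (fact vs)

lemma Mloc_rsub: assumes m: "max_w_ideal m" and L: "dsub sc L" shows "rsub sc (Dloc m) (Mloc sc m L)"
  unfolding rsub_def
proof (intro conjI ballI)
  have "1 \<notin> m" using max_w_idealD(3)[OF m] .
  moreover have "(0::'v) = sc (inverse (embD 1)) 0" by simp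
  ultimately show "0 \<in> Mloc sc m L" unfolding Mloc_def using dsubD(1)[OF vs L] by blast
next
  fix z1 z2 assume "z1 \<in> Mloc sc m L" "z2 \<in> Mloc sc m L"
  then obtain x1 t1 x2 t2 where z: "z1 = sc (inverse (embD t1)) x1" "z2 = sc (inverse (embD t2)) x2"
    and xt: "x1 \<in> L" "x2 \<in> L" "t1 \<notin> m" "t2 \<notin> m" unfolding Mloc_def by blast
  have ne: "embD t1 \<noteq> 0" "embD t2 \<noteq> 0" using xt(3,4) max_notin_ne[OF m] by auto
  have "sc (inverse (embD (t1 * t2))) (sc (embD t2) x1 + sc (embD t1) x2)
      = sc (inverse (embD (t1 * t2)) * embD t2) x1 + sc (inverse (embD (t1 * t2)) * embD t1) x2"
    by (simp add: scale_right_distrib)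
  also have "\<dots> = z1 + z2"
  proof -
    have "inverse (embD (t1 * t2)) * embD t2 = inverse (embD t1)"
      "inverse (embD (t1 * t2)) * embD t1 = inverse (embD t2)" using ne by (simp_all add: embD_mult field_simps)
    then show ?thesis by (simp add: z)
  qed
  finally have "z1 + z2 = sc (inverse (embD (t1 * t2))) (sc (embD t2) x1 + sc (embD t1) x2)" by simp
  moreover have "sc (embD t2) x1 + sc (embD t1) x2 \<in> L" using xt dsubD[OF vs L] by blast
  moreover have "t1 * t2 \<notin> m" using max_prime'[OF m xt(3,4)] .
  ultimately show "z1 + z2 \<in> Mloc sc m L" unfolding Mloc_def by blast
next
  fix r z assume "r \<in> Dloc m" "z \<in> Mloc sc m L"
  then obtain a b x t where r: "r = embD a / embD b" "b \<notin> m" and z: "z = sc (inverse (embD t)) x" "x \<in> L" "t \<notin> m"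
    unfolding Mloc_def Dloc_def by blast
  have "sc r z = sc (inverse (embD (b * t))) (sc (embD a) x)"
    by (simp add: r z embD_mult divide_inverse mult_ac)
  moreover have "sc (embD a) x \<in> L" using dsubD(3)[OF vs L z(2)] .
  moreover have "b * t \<notin> m" using max_prime'[OF m r(2) z(3)] .
  ultimately show "sc r z \<in> Mloc sc m L" unfolding Mloc_def by blast
qed

lemma Mloc_mono: "L \<subseteq> M \<Longrightarrow> Mloc sc m L \<subseteq> Mloc sc m M"
  unfolding Mloc_def by blast

lemma Mloc_self: "max_w_ideal m \<Longrightarrow> x \<in> L \<Longrightarrow> x \<in> Mloc sc m L"
proof -
  assume "max_w_ideal m" "x \<in> L"
  moreover have "x = sc (inverse (embD 1)) x" by simp
  ultimately show ?thesis using max_w_idealD(3) unfolding Mloc_def by blast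
qed

lemma Floc_rsub: assumes m: "max_w_ideal m" and F: "dsub sc F"
  shows "rsub sc (Dloc m) {z. \<exists>t. t \<notin> m \<and> sc (embD t) z \<in> F}"
  unfolding rsub_def
proof (intro conjI ballI)
  show "0 \<in> {z. \<exists>t. t \<notin> m \<and> sc (embD t) z \<in> F}"
    using max_w_idealD(3)[OF m] dsubD(1)[OF vs F] by auto
next
  fix z1 z2 assume "z1 \<in> {z. \<exists>t. t \<notin> m \<and> sc (embD t) z \<in> F}" "z2 \<in> {z. \<exists>t. t \<notin> m \<and> sc (embD t) z \<in> F}"
  then obtain t1 t2 where t: "t1 \<notin> m" "sc (embD t1) z1 \<in> F" "t2 \<notin> m" "sc (embD t2) z2 \<in> F" by blast
  have "sc (embD (t1 * t2)) (z1 + z2) = sc (embD t2) (sc (embD t1) z1) + sc (embD t1) (sc (embD t2) z2)"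
    by (simp add: scale_right_distrib embD_mult mult_ac)
  also have "\<dots> \<in> F" using t dsubD[OF vs F] by blast
  finally show "z1 + z2 \<in> {z. \<exists>t. t \<notin> m \<and> sc (embD t) z \<in> F}" using max_prime'[OF m t(1) t(3)] by blast
next
  fix r z assume "r \<in> Dloc m" "z \<in> {z. \<exists>t. t \<notin> m \<and> sc (embD t) z \<in> F}"
  then obtain a b t where r: "r = embD a / embD b" "b \<notin> m" and t: "t \<notin> m" "sc (embD t) z \<in> F"
    unfolding Dloc_def by blast
  have b0: "embD b \<noteq> 0" using r(2) max_notin_ne[OF m] by simp
  have "sc (embD (b * t)) (sc r z) = sc (embD a) (sc (embD t) z)"
    using b0 by (simp add: r embD_mult divide_inverse mult_ac)
  also have "\<dots> \<in> F" using t dsubD[OF vs F] by blast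
  finally show "sc r z \<in> {z. \<exists>t. t \<notin> m \<and> sc (embD t) z \<in> F}" using max_prime'[OF m r(2) t(1)] by blast
qed

end


context
  fixes sc :: "'a::idom fract \<Rightarrow> 'v::ab_group_add \<Rightarrow> 'v"
  assumes vs: "vector_space sc"
begin

interpretation vector_space sc by (fact vs)

lemma part2: assumes M: "dsub sc M" and S: "mult_subset S"
  and WL: "w_loc_S_noetherian sc S M" and FW: "finite_w_char sc M"
  shows "S_SM sc S M"
  unfolding S_SM_def
proof (intro allI impI)
  fix L assume "dsub sc L \<and> L \<subseteq> M \<and> wcl sc L = L"
  then have L: "dsub sc L" "L \<subseteq> M" "wcl sc L = L" by auto
  have second: "wcl sc (dspan sc G) \<subseteq> wcl sc L" if "G \<subseteq> L" for G
    by (rule wcl_mono[OF dspan_sub[OF vs L(1) that]])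
  have S1: "1 \<in> S" using S by (simp add: mult_subset_def)
  show "S_w_finite sc S M L"
  proof (cases "L \<subseteq> {0}")
    case True
    have "sc (embD 1) ` L \<subseteq> wcl sc (dspan sc {})"
    proof
      fix y assume "y \<in> sc (embD 1) ` L"
      then have "y = 0" using True by auto
      then show "y \<in> wcl sc (dspan sc {})"
        using dsub_wcl[OF vs dspan_dsub[OF vs]] dsubD(1)[OF vs dspan_dsub[OF vs]] by blast
    qed
    then show ?thesis unfolding S_w_finite_def using S1 second[of "{}"] by blast
  next
    case False
    then obtain a where a: "a \<in> L" "a \<noteq> 0" by blast
    have aM: "a \<in> M" using a L(2) by blast
    define Ms where "Ms = {m. max_w_ideal m \<and> colon sc a M \<subseteq> m}"
    have fMs: "finite Ms"
    proof (cases "colon sc a M = UNIV")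
      case True
      have "m \<notin> Ms" for m
      proof
        assume "m \<in> Ms"
        then have "1 \<notin> m" "colon sc a M \<subseteq> m" using max_w_idealD(3) unfolding Ms_def by auto
        then show False using True by blast
      qed
      then have "Ms = {}" by blast
      then show ?thesis by simp
    next
      case False
      have "finite {m. max_w_ideal m \<and> colon sc a M \<subseteq> m}"
        using FW aM a(2) False unfolding finite_w_char_def by blast
      then show ?thesis unfolding Ms_def .
    qed
    have "\<forall>m\<in>Ms. \<exists>p. fst p \<in> S \<and> finite (snd p) \<and> snd p \<subseteq> Mloc sc m L \<and>
        sc (embD (fst p)) ` Mloc sc m L \<subseteq> rspan sc (Dloc m) (snd p)"
    proof
      fix m assume "m \<in> Ms"
      then have m: "max_w_ideal m" by (simp add: Ms_def)
      then have SN: "S_noetherian sc (Dloc m) (embD ` S) (Mloc sc m M)" using WL by (simp add: w_loc_S_noetherian_def)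
      have R: "rsub sc (Dloc m) (Mloc sc m L)" by (rule Mloc_rsub[OF vs m L(1)])
      have LM: "Mloc sc m L \<subseteq> Mloc sc m M" by (rule Mloc_mono[OF vs L(2)])
      have "\<exists>t\<in>embD ` S. \<exists>G. finite G \<and> G \<subseteq> Mloc sc m L \<and> sc t ` Mloc sc m L \<subseteq> rspan sc (Dloc m) G \<and> rspan sc (Dloc m) G \<subseteq> Mloc sc m L"
        by (rule SN[unfolded S_noetherian_def, rule_format, of "Mloc sc m L"]) (intro conjI R LM)
      then obtain t G where tG: "t \<in> embD ` S" "finite G" "G \<subseteq> Mloc sc m L"
        "sc t ` Mloc sc m L \<subseteq> rspan sc (Dloc m) G" by blast
      from tG(1) obtain s where "s \<in> S" "t = embD s" by blast
      with tG have "s \<in> S" "finite G" "G \<subseteq> Mloc sc m L"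
        "sc (embD s) ` Mloc sc m L \<subseteq> rspan sc (Dloc m) G" by simp_all
      then show "\<exists>p. fst p \<in> S \<and> finite (snd p) \<and> snd p \<subseteq> Mloc sc m L \<and>
        sc (embD (fst p)) ` Mloc sc m L \<subseteq> rspan sc (Dloc m) (snd p)"
        by (intro exI[of _ "(s, G)"]) simp
    qed
    then obtain f where f: "\<And>m. m \<in> Ms \<Longrightarrow> fst (f m) \<in> S \<and> finite (snd (f m)) \<and> snd (f m) \<subseteq> Mloc sc m L \<and>
        sc (embD (fst (f m))) ` Mloc sc m L \<subseteq> rspan sc (Dloc m) (snd (f m))"
      using bchoice by metis
    define sf where "sf m = fst (f m)" for m
    define Gf where "Gf m = snd (f m)" for m
    have sf: "\<And>m. m \<in> Ms \<Longrightarrow> sf m \<in> S" and Gf: "\<And>m. m \<in> Ms \<Longrightarrow> finite (Gf m)"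
      "\<And>m. m \<in> Ms \<Longrightarrow> Gf m \<subseteq> Mloc sc m L"
      and sG: "\<And>m. m \<in> Ms \<Longrightarrow> sc (embD (sf m)) ` Mloc sc m L \<subseteq> rspan sc (Dloc m) (Gf m)"
      using f unfolding sf_def Gf_def by blast+
    define num where "num m g = (SOME x. x \<in> L \<and> (\<exists>u. u \<notin> m \<and> g = sc (inverse (embD u)) x))" for m g
    have num: "num m g \<in> L \<and> (\<exists>u. u \<notin> m \<and> g = sc (inverse (embD u)) (num m g))" if "m \<in> Ms" "g \<in> Gf m" for m g
    proof -
      have "\<exists>x. x \<in> L \<and> (\<exists>u. u \<notin> m \<and> g = sc (inverse (embD u)) x)"
        using Gf(2)[OF that(1)] that(2) unfolding Mloc_def by blast
      then show ?thesis unfolding num_def by (rule someI_ex)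
    qed
    define G' where "G' = insert a (\<Union>m\<in>Ms. num m ` Gf m)"
    have "finite (\<Union>m\<in>Ms. num m ` Gf m)" by (rule finite_UN_I[OF fMs]) (rule finite_imageI[OF Gf(1)])
    then have fG': "finite G'" unfolding G'_def by (rule finite.insertI)
    have "(\<Union>m\<in>Ms. num m ` Gf m) \<subseteq> L"
    proof
      fix y assume "y \<in> (\<Union>m\<in>Ms. num m ` Gf m)"
      then obtain m g where "m \<in> Ms" "g \<in> Gf m" "y = num m g" by blast
      then show "y \<in> L" using num by blast
    qed
    then have G'L: "G' \<subseteq> L" unfolding G'_def using a(1) by blast
    define s where "s = prod sf Ms"
    have sS: "s \<in> S" unfolding s_def by (rule prod_S[OF S sf])
    have Fd: "dsub sc (dspan sc G')" by (rule dspan_dsub[OF vs])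
    have "a \<in> G'" unfolding G'_def by (rule insertI1)
    then have aF: "a \<in> dspan sc G'" by (rule dspan_gen[OF vs fG'])
    have "sc (embD s) ` L \<subseteq> wcl sc (dspan sc G')"
    proof clarify
      fix x assume x: "x \<in> L"
      show "sc (embD s) x \<in> wcl sc (dspan sc G')"
      proof (rule local_global[OF vs Fd])
        fix m :: "'a set" assume m: "max_w_ideal m"
        show "\<exists>t. t \<notin> m \<and> sc (embD t) (sc (embD s) x) \<in> dspan sc G'"
        proof (cases "m \<in> Ms")
          case True
          define Fm where "Fm = {z. \<exists>t. t \<notin> m \<and> sc (embD t) z \<in> dspan sc G'}"
          have Fmr: "rsub sc (Dloc m) Fm" unfolding Fm_def by (rule Floc_rsub[OF vs m Fd])
          have "Gf m \<subseteq> Fm"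
          proof
            fix g assume g: "g \<in> Gf m"
            obtain u where u: "u \<notin> m" "g = sc (inverse (embD u)) (num m g)" using num[OF True g] by blast
            have "embD u \<noteq> 0" using max_notin_ne[OF m u(1)] by simp
            moreover have "sc (embD u) g = sc (embD u) (sc (inverse (embD u)) (num m g))"
              using u(2) by (rule arg_cong)
            ultimately have "sc (embD u) g = num m g" by simp
            moreover have "num m g \<in> G'" unfolding G'_def using True g by blast
            ultimately have "sc (embD u) g \<in> dspan sc G'" using dspan_gen[OF vs fG'] by metis
            then show "g \<in> Fm" unfolding Fm_def using u(1) by blast
          qed
          then have "rspan sc (Dloc m) (Gf m) \<subseteq> Fm" by (rule rspan_sub[OF vs Fmr])
          moreover have "sc (embD (sf m)) x \<in> rspan sc (Dloc m) (Gf m)"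
            using sG[OF True] Mloc_self[OF vs m x] by blast
          ultimately have "sc (embD (sf m)) x \<in> Fm" by blast
          then have "sc (embD (prod sf (Ms - {m}))) (sc (embD (sf m)) x) \<in> Fm"
            by (rule rsubD(3)[OF vs Fmr Dloc_embD[OF m]])
          moreover have "s = prod sf (Ms - {m}) * sf m"
            unfolding s_def using prod.remove[OF fMs True, of sf] by (simp add: mult.commute)
          ultimately have "sc (embD s) x \<in> Fm" by (simp add: embD_mult)
          then show ?thesis unfolding Fm_def by blast
        next
          case False
          then obtain d where d: "d \<in> colon sc a M" "d \<notin> m" using m unfolding Ms_def by blast
          then obtain e where e: "sc (embD d) x = sc (embD e) a" using x L(2) unfolding colon_def by blast
          have "sc (embD d) (sc (embD s) x) = sc (embD s) (sc (embD d) x)" by (rule scale_left_commute)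
          also have "\<dots> = sc (embD s) (sc (embD e) a)" by (simp only: e)
          also have "\<dots> = sc (embD (s * e)) a" by (simp add: embD_mult)
          also have "\<dots> \<in> dspan sc G'" by (rule dsubD(3)[OF vs Fd aF])
          finally show ?thesis using d(2) by blast
        qed
      qed
    qed
    then show ?thesis unfolding S_w_finite_def using sS fG' G'L L(2) second[OF G'L] by blast
  qed
qed

end

theorem proposition3p5:
  fixes sc :: "'a::idom fract \<Rightarrow> 'v::ab_group_add \<Rightarrow> 'v"
    and S :: "'a set" and M :: "'v set"
  assumes "vector_space sc"
    and "mult_subset S"
    and "dsub sc M"
    and "wcl sc M = M"
  shows "(S_SM sc S M \<longrightarrow> w_loc_S_noetherian sc S M) \<and>
         (w_loc_S_noetherian sc S M \<and> finite_w_char sc M \<longrightarrow> S_SM sc S M)"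
  using part1[OF assms(1) assms(3) assms(4)] part2[OF assms(1) assms(3) assms(2)] by blast

end
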